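(* Consider a single base station and $N=2$ users. At each slot $t=1,2,\ldots$, one of the two users is chosen uniformly at random, independently across slots, to have a \textsf{Good} channel, and the other has a \textsf{Bad} channel. At each slot the base station schedules exactly one user via an online policy $\pi$: the decision at slot $t$ is measurable with respect to the sigma-algebra generated by the ages and scheduling decisions up to slot $t-1$ (so it does not know the current channel states). The ages evolve as $h_i(t+1)=1$ if $\mathrm{UE}_i$ was scheduled at slot $t$ and its channel was \textsf{Good} at slot $t$, and $h_i(t+1)=h_i(t)+1$ otherwise. Let $H_{\mathrm{sum}}(t)=\mathbb{E}^\pi[h_1(t)]+\mathbb{E}^\pi[h_2(t)]$. Then for every online policy $\pi$, $\limsup_{T\to\infty}\frac{1}{T}\sum_{t=1}^{T}H_{\mathrm{sum}}(t)\ge 6$.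
   Context: Each scheduled transmission thus succeeds with probability $p_1=p_2=1/2$. The quantity bounded is the time-averaged expected sum of the two users' ages. *)

theory Defs
  imports "HOL-Probability.Probability"
begin

text \<open>A channel outcome at a slot is a bool: True means user 1 has the
Good channel (user 2 Bad), False means user 2 Good (user 1 Bad).
A scheduling decision is a bool: True means user 1 is scheduled, False user 2.
Ages are a pair (h1, h2).\<close>

type_synonym ages = "nat \<times> nat"

text \<open>An online (deterministic) policy: the decision at slot t is a function of the
history ((h(s), u(s)) for s = 1..t-1) together with the current ages h(t);
it never sees the current (or any) channel state directly.\<close>

type_synonym policy = "(ages \<times> bool) list \<Rightarrow> ages \<Rightarrow> bool"

definition age_update :: "bool \<Rightarrow> bool \<Rightarrow> ages \<Rightarrow> ages" where
  "age_update u c a =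
     (if u \<and> c then (1, snd a + 1)
      else if \<not> u \<and> \<not> c then (fst a + 1, 1)
      else (fst a + 1, snd a + 1))"

definition step :: "policy \<Rightarrow> (ages \<times> bool) list \<times> ages \<Rightarrow> bool \<Rightarrow> (ages \<times> bool) list \<times> ages" where
  "step \<pi> st c = (let H = fst st; a = snd st; u = \<pi> H a in (H @ [(a, u)], age_update u c a))"

definition run :: "policy \<Rightarrow> ages \<Rightarrow> bool list \<Rightarrow> (ages \<times> bool) list \<times> ages" where
  "run \<pi> h0 cs = foldl (step \<pi>) ([], h0) cs"

text \<open>Expected sum of ages at slot t (t \<ge> 1), with initial ages h0 at slot 1; the
channel outcomes of slots 1..t-1 are i.i.d. uniform, i.e. uniform over bool lists
of length t-1.\<close>

definition Hsum :: "policy \<Rightarrow> ages \<Rightarrow> nat \<Rightarrow> real" where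
  "Hsum \<pi> h0 t = measure_pmf.expectation (pmf_of_set {cs :: bool list. length cs = t - 1})
      (\<lambda>cs. real (fst (snd (run \<pi> h0 cs))) + real (snd (snd (run \<pi> h0 cs))))"

end

theory Submission
  imports Defs
begin

definition bnd :: "nat \<Rightarrow> real \<Rightarrow> real \<Rightarrow> real" where
  "bnd n p q = 6 - (2 * real n + 6) / 2 ^ n + (real n + 1) / 2 ^ n * p + q / 2 ^ n"

lemma bnd_0: "bnd 0 p q = p + q"
  by (simp add: bnd_def)

lemma bnd_Suc: "bnd (Suc n) p q = (bnd n 1 (p + 1) + bnd n (p + 1) (q + 1)) / 2"
  by (simp add: bnd_def field_simps)

lemma lists_Suc:
  "{cs :: bool list. length cs = Suc n} =
     Cons True ` {cs. length cs = n} \<union> Cons False ` {cs. length cs = n}"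
  by (auto simp: length_Suc_conv image_def)

lemma lists_finite: "finite {cs :: bool list. length cs = n}"
  by (induction n) (simp_all add: lists_Suc)

lemma lists_card: "card {cs :: bool list. length cs = n} = 2 ^ n"
proof (induction n)
  case 0 then show ?case by simp
next
  case (Suc n)
  have "card {cs :: bool list. length cs = Suc n} =
     card (Cons True ` {cs. length cs = n}) + card (Cons False ` {cs. length cs = n})"
    unfolding lists_Suc by (rule card_Un_disjoint) (auto simp: lists_finite)
  also have "\<dots> = 2 ^ Suc n" using Suc by (simp add: card_image)
  finally show ?case .
qed

definition S :: "(ages \<times> bool) list \<times> ages \<Rightarrow> real" where
  "S st = real (fst (snd st)) + real (snd (snd st))"

lemma main:
  "\<And>H a p q. min (fst a) (snd a) \<ge> p \<Longrightarrow> fst a + snd a \<ge> p + q \<Longrightarrow>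
    (\<Sum>cs\<in>{cs :: bool list. length cs = n}. S (foldl (step \<pi>) (H, a) cs)) \<ge> 2 ^ n * bnd n p q"
proof (induction n)
  case (0 H a p q)
  then show ?case by (simp add: bnd_0 S_def)
next
  case (Suc n H a p q)
  define L where "L = {cs :: bool list. length cs = n}"
  have fin: "finite L" unfolding L_def by (rule lists_finite)
  have sum_eq: "(\<Sum>cs\<in>{cs :: bool list. length cs = Suc n}. S (foldl (step \<pi>) (H, a) cs)) =
     (\<Sum>cs\<in>L. S (foldl (step \<pi>) (step \<pi> (H, a) True) cs)) +
     (\<Sum>cs\<in>L. S (foldl (step \<pi>) (step \<pi> (H, a) False) cs))"
  proof -
    have "(\<Sum>cs\<in>{cs :: bool list. length cs = Suc n}. S (foldl (step \<pi>) (H, a) cs)) =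
      (\<Sum>cs\<in>Cons True ` L. S (foldl (step \<pi>) (H, a) cs)) +
      (\<Sum>cs\<in>Cons False ` L. S (foldl (step \<pi>) (H, a) cs))"
      unfolding lists_Suc L_def[symmetric] by (rule sum.union_disjoint) (auto simp: fin)
    also have "\<dots> = (\<Sum>cs\<in>L. S (foldl (step \<pi>) (step \<pi> (H, a) True) cs)) +
     (\<Sum>cs\<in>L. S (foldl (step \<pi>) (step \<pi> (H, a) False) cs))"
      by (simp add: sum.reindex)
    finally show ?thesis .
  qed
  define u where "u = \<pi> H a"
  have stp: "step \<pi> (H, a) c = (H @ [(a, u)], age_update u c a)" for c
    by (simp add: step_def u_def Let_def)
  have succ: "(\<Sum>cs\<in>L. S (foldl (step \<pi>) (step \<pi> (H, a) u) cs)) \<ge> 2 ^ n * bnd n 1 (p + 1)"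
  proof -
    have "(\<Sum>cs\<in>L. S (foldl (step \<pi>) (H @ [(a, u)], age_update u u a) cs)) \<ge>
        2 ^ n * bnd n (real 1) (real (p + 1))"
      unfolding L_def using Suc.prems
      by (intro Suc.IH) (auto simp: age_update_def)
    then show ?thesis by (simp add: stp)
  qed
  have fail: "(\<Sum>cs\<in>L. S (foldl (step \<pi>) (step \<pi> (H, a) (\<not> u)) cs)) \<ge> 2 ^ n * bnd n (p + 1) (q + 1)"
  proof -
    have "(\<Sum>cs\<in>L. S (foldl (step \<pi>) (H @ [(a, u)], age_update u (\<not> u) a) cs)) \<ge>
        2 ^ n * bnd n (real (p + 1)) (real (q + 1))"
      unfolding L_def using Suc.prems
      by (intro Suc.IH) (auto simp: age_update_def)
    then show ?thesis by (simp add: stp)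
  qed
  have "(\<Sum>cs\<in>L. S (foldl (step \<pi>) (step \<pi> (H, a) True) cs)) +
     (\<Sum>cs\<in>L. S (foldl (step \<pi>) (step \<pi> (H, a) False) cs)) \<ge>
     2 ^ n * bnd n 1 (p + 1) + 2 ^ n * bnd n (p + 1) (q + 1)"
    using succ fail by (cases u) auto
  then show ?case unfolding sum_eq bnd_Suc by (simp add: algebra_simps)
qed

lemma Hsum_ge: "Hsum \<pi> h0 t \<ge> bnd (t - 1) 0 0"
proof -
  define L where "L = {cs :: bool list. length cs = t - 1}"
  have fin: "finite L" and ne: "L \<noteq> {}" unfolding L_def using lists_finite
    by auto (metis Ex_list_of_length)
  have "Hsum \<pi> h0 t = (\<Sum>cs\<in>L. S (foldl (step \<pi>) ([], h0) cs)) / card L"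
    unfolding Hsum_def L_def[symmetric] using fin ne
    by (simp add: integral_pmf_of_set S_def run_def)
  also have "card L = (2::real) ^ (t - 1)" unfolding L_def lists_card by simp
  finally have e: "Hsum \<pi> h0 t = (\<Sum>cs\<in>L. S (foldl (step \<pi>) ([], h0) cs)) / 2 ^ (t - 1)" .
  have "(\<Sum>cs\<in>L. S (foldl (step \<pi>) ([], h0) cs)) \<ge> 2 ^ (t - 1) * bnd (t - 1) (real 0) (real 0)"
    unfolding L_def by (rule main) auto
  then show ?thesis unfolding e by (simp add: field_simps)
qed

lemma geo_sum: "(\<Sum>n<N. (2 * real n + 6) / 2 ^ n) = 16 - (4 * real N + 16) / 2 ^ N"
proof (induction N)
  case 0 then show ?case by simp
next
  case (Suc N)
  have "(4 * real N + 16) / 2 ^ N - (2 * real N + 6) / 2 ^ N = (4 * real (Suc N) + 16) / 2 ^ (Suc N)"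
    by (simp add: field_simps)
  then show ?case using Suc by simp
qed

lemma avg_ge:
  assumes "T \<ge> 1"
  shows "(\<Sum>t\<in>{1..T}. Hsum \<pi> h0 t) / real T \<ge> 6 - 16 / real T"
proof -
  have "(\<Sum>t\<in>{1..T}. Hsum \<pi> h0 t) \<ge> (\<Sum>t\<in>{1..T}. bnd (t - 1) 0 0)"
    by (intro sum_mono Hsum_ge)
  also have "(\<Sum>t\<in>{1..T}. bnd (t - 1) 0 0) = (\<Sum>n<T. bnd n 0 0)"
    by (induction T) simp_all
  also have "\<dots> = 6 * real T - (\<Sum>n<T. (2 * real n + 6) / 2 ^ n)"
    by (simp add: bnd_def sum_subtractf)
  also have "\<dots> \<ge> 6 * real T - 16" unfolding geo_sum by (simp add: field_simps)
  finally have "(\<Sum>t\<in>{1..T}. Hsum \<pi> h0 t) \<ge> 6 * real T - 16" by simp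
  then have "(6 * real T - 16) / real T \<le> (\<Sum>t\<in>{1..T}. Hsum \<pi> h0 t) / real T"
    using assms by (intro divide_right_mono) auto
  moreover have "(6 * real T - 16) / real T = 6 - 16 / real T" using assms by (simp add: field_simps)
  ultimately show ?thesis by simp
qed

theorem proposition1:
  fixes \<pi> :: policy and h0 :: ages
  shows "limsup (\<lambda>T::nat. ereal ((\<Sum>t\<in>{1..T}. Hsum \<pi> h0 t) / real T)) \<ge> 6"
proof -
  have lim: "((\<lambda>T::nat. ereal (6 - 16 / real T)) \<longlongrightarrow> ereal 6) sequentially"
  proof -
    have "((\<lambda>T::nat. 6 - 16 / real T) \<longlongrightarrow> 6 - 0) sequentially"
      by (intro tendsto_intros tendsto_divide_0[OF tendsto_const] filterlim_real_sequentially)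
    then show ?thesis by (simp add: tendsto_ereal)
  qed
  have "limsup (\<lambda>T::nat. ereal (6 - 16 / real T)) = 6"
    using lim_imp_Limsup[OF _ lim] by simp
  moreover have "limsup (\<lambda>T::nat. ereal (6 - 16 / real T)) \<le>
     limsup (\<lambda>T::nat. ereal ((\<Sum>t\<in>{1..T}. Hsum \<pi> h0 t) / real T))"
    by (intro Limsup_mono eventually_sequentiallyI[of 1]) (subst ereal_less_eq(3), rule avg_ge)
  ultimately show ?thesis by simp
qed

end
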